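(* Let $S$ be an instance of SCS-RC, let $T$ be the set computed by \textsf{MGREEDY-RC} on $S$, and let $\mathcal C$ be the cycle cover of $G_S$ produced by \textsf{MGREEDY-RC}. For each cycle $C\in\mathcal C$ let $x_C$ be a string satisfying properties (1)–(4) below, and let $A=\{x_C : C\in\mathcal C\}$. Then $\|T\| \le \|A\|$, where $\|T\|=\sum_{t\in T}|t|$ and $\|A\|=\sum_{C\in\mathcal C}|x_C|$.
   Context: Alphabet $\Sigma=\{\texttt a,\texttt t,\texttt g,\texttt c\}$ with complement $\bar{\texttt a}=\texttt t$, $\bar{\texttt t}=\texttt a$, $\bar{\texttt g}=\texttt c$, $\bar{\texttt c}=\texttt g$; the reverse complement of $s=b_1\cdots b_n$ is $\bar{s}^R=\bar{b_n}\cdots\bar{b_1}$, and $\bar S^R=\{\bar s^R: s\in S\}$. An instance of SCS-RC is a finite set $S=\{s_1,\dots,s_m\}$ of strings over $\Sigma$ such that no string of $S\cup\bar S^R$ is a substring of another. For strings $x,y$, $\mathrm{ov}(x,y)$ is the length of the longest $v$ with $x=uv$, $y=vw$ for nonempty $u,w$; $\mathrm{pref}(x,y)=u$; $\mathrm{dist}(x,y)=|x|-\mathrm{ov}(x,y)$; $\langle x_1,\dots,x_r\rangle=\mathrm{pref}(x_1,x_2)\cdots\mathrm{pref}(x_{r-1},x_r)\,x_r$. The distance graph $G_S$ is the complete directed graph (with loops) on $S\cup\bar S^R$ with edge weights $\mathrm{dist}$; a cycle $z_1,\dots,z_r,z_1$ (distinct vertices) has weight $w(C)=\sum_i\mathrm{dist}(z_i,z_{i+1})$,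 $z_{r+1}=z_1$; a cycle cover contains, as vertex-disjoint cycles, exactly one of $s_i,\bar{s_i}^R$ for each $i$. \textsf{MGREEDY-RC} on $S$: set $T=\emptyset$; while $S\ne\emptyset$: among pairs $(x,y)\in (S\cup\bar S^R)^2$ with $x=y$, or with $x\ne y$ and $\bar x^R\ne y$, pick one maximizing $\mathrm{ov}(x,y)$ (ties arbitrary); if $x=y$, remove $x,\bar x^R$ from $S$ and add $x$ to $T$; otherwise remove $x,\bar x^R,y,\bar y^R$ from $S$ and add $\langle x,y\rangle$. Each current string $z$ is associated with a sequence $(z_1,\dots,z_h)$ of vertices of $G_S$ with $z=\langle z_1,\dots,z_h\rangle$: initially $s_i\leftrightarrow(s_i)$; $\bar z^R\leftrightarrow(\bar{z_h}^R,\dots,\bar{z_1}^R)$; a merged string $\langle x,y\rangle$ is associated with the concatenation of the sequences of $x$ and $y$; when $z$ with sequence $(z_1,\dots,z_h)$ is moved to $T$, the cycle $z_1,\dots,z_h,z_1$ is formed. These cycles form the cycle cover $\mathcal C$ (which is an optimal cycle cover), and $T$ consists of the strings $\langle z_1,\dots,z_h\rangle$ for the cycles $z_1,\dots,z_h,z_1\in\mathcal C$. Periodicity: for a finite string $s$, $\mathrm{factor}(s)$ is the shortest $x$ with $s=x^iy$, $i\ge1$, $y$ a (possibly empty) prefix of $x$; for a semi-infinite string $s$ with $s=xs$ for some nonempty $x$ ($s$ periodic), $\mathrm{factor}(s)$ is the shortest such $x$; $\mathrm{period}(s)=|\mathrm{factor}(s)|$. Strings (finite or periodic semi-infinite) $x,y$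 are equivalent if $\mathrm{factor}(x)=pq$, $\mathrm{factor}(y)=qp$ for some $p,q$, inequivalent otherwise. For semi-infinite $\alpha=c_1c_2\cdots$, $\alpha[k]=c_kc_{k+1}\cdots$; for finite $s$, $\mathrm{ov}(s,\alpha[k])$ is the length of the longest $v$ with $s=uv$, $u$ nonempty, $v$ a prefix of $\alpha[k]$. $\alpha[k]$ is a critical rotation of a periodic semi-infinite $\alpha$ if $\mathrm{ov}(s,\alpha[k])\le\mathrm{period}(s)+\tfrac12\mathrm{period}(\alpha)$ for every finite $s$ inequivalent to $\alpha$. Properties of $x_C$, for the cycle $C=z_1,\dots,z_r,z_1$ with $\langle z_1,\dots,z_r\rangle\in T$: there is an index $j\in\{1,\dots,r\}$ such that (1) $\langle z_{j+1},\dots,z_r,z_1,\dots,z_j\rangle$ is a suffix of $x_C$; (2) $x_C$ is a substring of $y_C=\langle z_j,\dots,z_r,z_1,\dots,z_j\rangle$; (3) $x_C$ is equivalent to $\langle z_{j+1},\dots,z_r,z_1,\dots,z_j\rangle$; (4) $\mathrm{factor}(x_C)^\infty$ is a critical rotation of $\mathrm{factor}(\langle z_1,\dots,z_r\rangle)^\infty$. (Such strings are known to exist.) *)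

theory Defs
  imports Complex_Main "HOL-Library.Sublist"
begin

datatype base = Ba | Bt | Bg | Bc

fun comp :: "base \<Rightarrow> base" where
  "comp Ba = Bt" | "comp Bt = Ba" | "comp Bg = Bc" | "comp Bc = Bg"

type_synonym dna = "base list"

definition rc :: "dna \<Rightarrow> dna" where
  "rc s = rev (map comp s)"

definition ov :: "dna \<Rightarrow> dna \<Rightarrow> nat" where
  "ov x y = Max {k. k < length x \<and> k < length y \<and> drop (length x - k) x = take k y}"

definition pref :: "dna \<Rightarrow> dna \<Rightarrow> dna" where
  "pref x y = take (length x - ov x y) x"

definition dist :: "dna \<Rightarrow> dna \<Rightarrow> nat" where
  "dist x y = length x - ov x y"

fun merge :: "dna list \<Rightarrow> dna" where
  "merge [] = []"
| "merge [x] = x"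
| "merge (x # y # xs) = pref x y @ merge (y # xs)"

definition scs_rc_instance :: "dna set \<Rightarrow> bool" where
  "scs_rc_instance S \<longleftrightarrow> finite S \<and>
     (\<forall>a \<in> S \<union> rc ` S. \<forall>b \<in> S \<union> rc ` S. a \<noteq> b \<longrightarrow> \<not> sublist a b)"

text \<open>A current string is represented by its associated sequence of vertices of G_S;
  the sequence associated with the reverse complement is rcseq.\<close>
definition rcseq :: "dna list \<Rightarrow> dna list" where
  "rcseq p = rev (map rc p)"

text \<open>The state set Q contains the sequences of the current strings together with those
  of their reverse complements (i.e. it represents S \<union> rc S).\<close>
definition allowed :: "dna list set \<Rightarrow> dna list \<Rightarrow> dna list \<Rightarrow> bool" where
  "allowed Q p q \<longleftrightarrow> p \<in> Q \<and> q \<in> Q \<and> (p = q \<or> (p \<noteq> q \<and> rcseq p \<noteq> q))"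

definition maximal_pair :: "dna list set \<Rightarrow> dna list \<Rightarrow> dna list \<Rightarrow> bool" where
  "maximal_pair Q p q \<longleftrightarrow> allowed Q p q \<and>
     (\<forall>p' q'. allowed Q p' q' \<longrightarrow> ov (merge p') (merge q') \<le> ov (merge p) (merge q))"

text \<open>One step of MGREEDY-RC on states (Q, cycles found so far); ties are arbitrary.\<close>
inductive mg_step :: "dna list set \<times> dna list list \<Rightarrow> dna list set \<times> dna list list \<Rightarrow> bool" where
  self: "maximal_pair Q p p \<Longrightarrow> mg_step (Q, cs) (Q - {p, rcseq p}, cs @ [p])"
| join: "maximal_pair Q p q \<Longrightarrow> p \<noteq> q \<Longrightarrow>
     mg_step (Q, cs) ((Q - {p, rcseq p, q, rcseq q}) \<union> {p @ q, rcseq (p @ q)}, cs)"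

definition mg_init :: "dna set \<Rightarrow> dna list set" where
  "mg_init S = (\<lambda>s. [s]) ` (S \<union> rc ` S)"

text \<open>cs is the list of cycles (z_1,...,z_h) of the cycle cover produced by some run of
  MGREEDY-RC on S; T consists of the strings merge c for c in cs.\<close>
definition mgreedy_run :: "dna set \<Rightarrow> dna list list \<Rightarrow> bool" where
  "mgreedy_run S cs \<longleftrightarrow> mg_step\<^sup>*\<^sup>* (mg_init S, []) ({}, cs)"

definition factor :: "dna \<Rightarrow> dna" where
  "factor s = take (LEAST k. \<exists>i y. i \<ge> 1 \<and> s = concat (replicate i (take k s)) @ y
                                  \<and> prefix y (take k s)) s"

definition period :: "dna \<Rightarrow> nat" where
  "period s = length (factor s)"

type_synonym inf_dna = "nat \<Rightarrow> base"

definition periodic :: "inf_dna \<Rightarrow> bool" where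
  "periodic \<alpha> \<longleftrightarrow> (\<exists>n>0. \<forall>i. \<alpha> (i + n) = \<alpha> i)"

definition period_inf :: "inf_dna \<Rightarrow> nat" where
  "period_inf \<alpha> = (LEAST n. n > 0 \<and> (\<forall>i. \<alpha> (i + n) = \<alpha> i))"

definition factor_inf :: "inf_dna \<Rightarrow> dna" where
  "factor_inf \<alpha> = map \<alpha> [0..<period_inf \<alpha>]"

definition inf_pow :: "dna \<Rightarrow> inf_dna" where
  "inf_pow x = (\<lambda>n. x ! (n mod length x))"

definition equiv_fin :: "dna \<Rightarrow> dna \<Rightarrow> bool" where
  "equiv_fin s t \<longleftrightarrow> (\<exists>p q. factor s = p @ q \<and> factor t = q @ p)"

definition equiv_fin_inf :: "dna \<Rightarrow> inf_dna \<Rightarrow> bool" where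
  "equiv_fin_inf s \<alpha> \<longleftrightarrow> (\<exists>p q. factor s = p @ q \<and> factor_inf \<alpha> = q @ p)"

definition ov_inf :: "dna \<Rightarrow> inf_dna \<Rightarrow> nat" where
  "ov_inf s \<beta> = Max {l. l < length s \<and> (\<forall>i<l. s ! (length s - l + i) = \<beta> i)}"

definition critical_rotation :: "inf_dna \<Rightarrow> inf_dna \<Rightarrow> bool" where
  "critical_rotation \<beta> \<alpha> \<longleftrightarrow> periodic \<alpha> \<and> (\<exists>k. \<beta> = (\<lambda>n. \<alpha> (n + k))) \<and>
     (\<forall>s. \<not> equiv_fin_inf s \<alpha> \<longrightarrow>
        real (ov_inf s \<beta>) \<le> real (period s) + real (period_inf \<alpha>) / 2)"

definition xC_props :: "dna list \<Rightarrow> dna \<Rightarrow> bool" where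
  "xC_props c x \<longleftrightarrow> (\<exists>j. 1 \<le> j \<and> j \<le> length c \<and>
      suffix (merge (drop j c @ take j c)) x \<and>
      sublist x (merge (drop (j - 1) c @ take j c)) \<and>
      equiv_fin x (merge (drop j c @ take j c)) \<and>
      critical_rotation (inf_pow (factor x)) (inf_pow (factor (merge c))))"

end

theory Submission
  imports Defs
begin

lemma comp_comp[simp]: "comp (comp b) = b" by (cases b) auto

lemma rc_rc[simp]: "rc (rc s) = s"
  by (simp add: rc_def rev_map comp_def o_def)

lemma length_rc[simp]: "length (rc s) = length s" by (simp add: rc_def)

lemma rc_inj: "rc s = rc t \<Longrightarrow> s = t" by (metis rc_rc)

lemma rc_Nil[simp]: "rc s = [] \<longleftrightarrow> s = []" by (simp add: rc_def)

lemma rcseq_rcseq[simp]: "rcseq (rcseq X) = X"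
  by (simp add: rcseq_def rev_map o_def)

lemma rcseq_append: "rcseq (p @ q) = rcseq q @ rcseq p" by (simp add: rcseq_def)

lemma set_rcseq[simp]: "set (rcseq X) = rc ` set X" by (simp add: rcseq_def)

lemma rcseq_Nil[simp]: "rcseq X = [] \<longleftrightarrow> X = []" by (simp add: rcseq_def)

lemma hd_rcseq: "X \<noteq> [] \<Longrightarrow> hd (rcseq X) = rc (last X)"
  by (simp add: rcseq_def hd_rev last_map)

lemma last_rcseq: "X \<noteq> [] \<Longrightarrow> last (rcseq X) = rc (hd X)"
  by (simp add: rcseq_def last_rev hd_map)

lemma ov_fin: "finite {k. k < length x \<and> k < length y \<and> drop (length x - k) x = take k y}"
  by (rule finite_subset[of _ "{..<length x}"]) auto

lemma ov_props:
  assumes "x \<noteq> []" "y \<noteq> []"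
  shows "ov x y < length x \<and> ov x y < length y \<and> drop (length x - ov x y) x = take (ov x y) y"
proof -
  have "0 \<in> {k. k < length x \<and> k < length y \<and> drop (length x - k) x = take k y}"
    using assms by simp
  then have "ov x y \<in> {k. k < length x \<and> k < length y \<and> drop (length x - k) x = take k y}"
    unfolding ov_def using ov_fin by (intro Max_in) auto
  then show ?thesis by simp
qed

lemma ov_ge:
  assumes "k < length x" "k < length y" "drop (length x - k) x = take k y"
  shows "k \<le> ov x y"
  unfolding ov_def using assms ov_fin by (intro Max_ge) auto

lemma rc_take: "k \<le> length x \<Longrightarrow> drop (length x - k) (rc x) = rc (take k x)"
proof -
  assume k: "k \<le> length x"
  have "rev (take k (map comp x)) = drop (length (map comp x) - k) (rev (map comp x))"
    by (rule rev_take)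
  then show ?thesis by (simp add: rc_def take_map)
qed

lemma rc_drop: "k \<le> length y \<Longrightarrow> take k (rc y) = rc (drop (length y - k) y)"
proof -
  assume k: "k \<le> length y"
  have "rev (drop (length y - k) (map comp y)) = take (length (map comp y) - (length y - k)) (rev (map comp y))"
    by (rule rev_drop)
  moreover have "length (map comp y) - (length y - k) = k" using k by simp
  ultimately show ?thesis by (simp add: rc_def drop_map)
qed

lemma rc_eq_iff: "rc u = rc v \<longleftrightarrow> u = v" by (metis rc_rc)

lemma ov_rc: "ov (rc x) (rc y) = ov y x"
proof -
  have "{k. k < length (rc x) \<and> k < length (rc y) \<and> drop (length (rc x) - k) (rc x) = take k (rc y)}
      = {k. k < length y \<and> k < length x \<and> drop (length y - k) y = take k x}"
  proof (rule Collect_cong)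
    fix k
    show "(k < length (rc x) \<and> k < length (rc y) \<and> drop (length (rc x) - k) (rc x) = take k (rc y)) =
          (k < length y \<and> k < length x \<and> drop (length y - k) y = take k x)"
    proof (cases "k < length x \<and> k < length y")
      case True
      then have "drop (length (rc x) - k) (rc x) = rc (take k x)" "take k (rc y) = rc (drop (length y - k) y)"
        using rc_take[of k x] rc_drop[of k y] by auto
      then show ?thesis using True rc_eq_iff by auto
    next
      case False
      then show ?thesis by auto
    qed
  qed
  then show ?thesis unfolding ov_def by simp
qed

lemma merge_Cons2[simp]: "merge (x # y # xs) = pref x y @ merge (y # xs)" by simp

lemma suffix_last_merge: "xs \<noteq> [] \<Longrightarrow> suffix (last xs) (merge xs)"
  by (induction xs rule: merge.induct) (auto intro: suffix_appendI)

lemma pref_decomp: "x \<noteq> [] \<Longrightarrow> y \<noteq> [] \<Longrightarrow> x = pref x y @ take (ov x y) y"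
  using ov_props[of x y] unfolding pref_def by (metis append_take_drop_id)

lemma prefix_hd_merge: "xs \<noteq> [] \<Longrightarrow> \<forall>e\<in>set xs. e \<noteq> [] \<Longrightarrow> prefix (hd xs) (merge xs)"
proof (induction xs rule: merge.induct)
  case (3 x y xs)
  then have "prefix y (merge (y # xs))" by simp
  then have "prefix (take (ov x y) y) (merge (y # xs))"
    by (meson prefix_order.trans take_is_prefix)
  then have "prefix (pref x y @ take (ov x y) y) (pref x y @ merge (y # xs))" by simp
  then show ?case using pref_decomp[of x y] 3 by simp
qed auto

lemma ov_ends:
  assumes "suffix a A" "prefix b B" "a \<noteq> []" "b \<noteq> []"
  shows "ov a b \<le> ov A B"
proof -
  obtain A0 where A: "A = A0 @ a" using assms(1) by (auto simp: suffix_def)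
  obtain B0 where B: "B = b @ B0" using assms(2) by (auto simp: prefix_def)
  let ?k = "ov a b"
  have p: "?k < length a" "?k < length b" "drop (length a - ?k) a = take ?k b"
    using ov_props[OF assms(3,4)] by auto
  show ?thesis
  proof (rule ov_ge)
    show "?k < length A" "?k < length B" using p A B by auto
    have "drop (length A - ?k) A = drop (length a - ?k) a" using A p by simp
    also have "\<dots> = take ?k B" using B p by simp
    finally show "drop (length A - ?k) A = take ?k B" .
  qed
qed


lemma sublist_td: "sublist (take n (drop s xs)) xs"
  by (meson sublist_take sublist_drop sublist_order.order.trans)

fun edges :: "'a list \<Rightarrow> ('a \<times> 'a) list" where
  "edges (x # y # xs) = (x, y) # edges (y # xs)"
| "edges _ = []"

lemma edges_append: "A \<noteq> [] \<Longrightarrow> B \<noteq> [] \<Longrightarrow> edges (A @ B) = edges A @ (last A, hd B) # edges B"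
proof (induction A)
  case (Cons x xs)
  then show ?case by (cases xs; cases B) auto
qed simp

lemma merge_len:
  "xs \<noteq> [] \<Longrightarrow> \<forall>e\<in>set xs. e \<noteq> [] \<Longrightarrow>
   length (merge xs) + sum_list (map (\<lambda>(x, y). ov x y) (edges xs)) = sum_list (map length xs)"
proof (induction xs rule: merge.induct)
  case (3 x y xs)
  have "ov x y < length x" using ov_props[of x y] 3 by auto
  then show ?case using 3 by (simp add: pref_def)
qed auto

lemma merge_all_nil: "\<forall>e\<in>set xs. e = [] \<Longrightarrow> merge xs = []"
  by (induction xs rule: merge.induct) (auto simp: pref_def)

lemma straddleL:
  "\<forall>e\<in>set q. e \<noteq> [] \<and> \<not> sublist a e \<and> \<not> sublist e a \<Longrightarrow> merge q = u @ a @ w \<Longrightarrow> w \<noteq> []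
   \<Longrightarrow> \<exists>x y. (x, y) \<in> set (edges q) \<and> ov x y < ov a y"
proof (induction q arbitrary: u rule: merge.induct)
  case (2 b)
  then show ?case by (auto simp: sublist_def)
next
  case (3 b c rest)
  define Mg where "Mg = merge (b # c # rest)"
  define M' where "M' = merge (c # rest)"
  define d where "d = length (pref b c)"
  define ob where "ob = ov b c"
  have ne: "b \<noteq> []" "c \<noteq> []" "\<forall>e\<in>set (c # rest). e \<noteq> []" using 3 by auto
  have op: "ob < length b" "ob < length c" using ov_props[OF ne(1,2)] ob_def by auto
  have dd: "d = length b - ob" unfolding d_def pref_def ob_def using op ob_def by simp
  have MgM: "Mg = pref b c @ M'" unfolding Mg_def M'_def by simp
  obtain r where r: "M' = c @ r" using prefix_hd_merge[of "c # rest"] ne unfolding M'_def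
    by (auto simp: prefix_def)
  obtain z where z: "Mg = b @ z" using prefix_hd_merge[of "b # c # rest"] 3(2) unfolding Mg_def
    by (auto simp: prefix_def)
  have ua: "Mg = u @ a @ w" using 3 Mg_def by simp
  show ?case
  proof (cases "length u \<ge> d")
    case True
    have "drop d Mg = M'" using MgM d_def by simp
    moreover have "drop d Mg = drop d u @ a @ w" using ua True by simp
    ultimately have "merge (c # rest) = drop d u @ a @ w" using M'_def by simp
    then obtain x y where "(x, y) \<in> set (edges (c # rest))" "ov x y < ov a y"
      using 3 by (metis list.set_intros(2))
    then show ?thesis by auto
  next
    case False
    define s where "s = length u"
    have sd: "s < d" using False s_def by simp
    have hA: "\<And>i. i < length a \<Longrightarrow> Mg ! (s + i) = a ! i" using ua s_def by (simp add: nth_append)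
    have hB: "\<And>i. i < length b \<Longrightarrow> Mg ! i = b ! i" using z by (simp add: nth_append)
    have hC: "\<And>i. i < length c \<Longrightarrow> Mg ! (d + i) = c ! i" using MgM r d_def by (simp add: nth_append)
    have lenMg: "length Mg = s + length a + length w" using ua s_def by simp
    have s1: "s + length a > length b"
    proof (rule ccontr)
      assume "\<not> ?thesis"
      then have "a = take (length a) (drop s b)"
        by (intro nth_equalityI) (auto simp: hA[symmetric] hB)
      then have "sublist a b" by (metis sublist_td)
      then show False using 3(2) by auto
    qed
    have s2: "s + length a < d + length c"
    proof (rule ccontr)
      assume "\<not> ?thesis"
      then have big: "d + length c \<le> s + length a" by simp
      have "c = take (length c) (drop (d - s) a)"
      proof (rule nth_equalityI)
        show "length c = length (take (length c) (drop (d - s) a))" using big sd by simp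
        fix i assume i: "i < length c"
        have "take (length c) (drop (d - s) a) ! i = a ! (d - s + i)" using i big sd by simp
        also have "\<dots> = Mg ! (s + (d - s + i))" using hA[of "d - s + i"] i big sd by simp
        also have "\<dots> = c ! i" using hC[OF i] sd by simp
        finally show "c ! i = take (length c) (drop (d - s) a) ! i" by simp
      qed
      then have "sublist c a" by (metis sublist_td)
      then show False using 3(2) by auto
    qed
    define l where "l = s + length a - d"
    have l1: "l < length a" "l < length c" "ob < l" using sd s1 s2 dd op l_def by auto
    have "drop (length a - l) a = take l c"
    proof (intro nth_equalityI)
      show "length (drop (length a - l) a) = length (take l c)" using l1 by simp
      fix i assume "i < length (drop (length a - l) a)"
      then have i: "i < l" using l1 by simp
      have "drop (length a - l) a ! i = a ! (d - s + i)" using l1 i l_def sd by simp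
      also have "\<dots> = Mg ! (d + i)" using hA[of "d - s + i"] i l_def sd by simp
      also have "\<dots> = c ! i" using hC i l1 by simp
      finally show "drop (length a - l) a ! i = take l c ! i" using i by simp
    qed
    then have "l \<le> ov a c" using ov_ge l1 by blast
    then show ?thesis using l1 ob_def by (intro exI[of _ b] exI[of _ c]) auto
  qed
qed auto

lemma straddleR:
  "\<forall>e\<in>set p. e \<noteq> [] \<and> \<not> sublist b e \<and> \<not> sublist e b \<Longrightarrow> merge p = u @ b @ w \<Longrightarrow> u \<noteq> []
   \<Longrightarrow> \<exists>x y. (x, y) \<in> set (edges p) \<and> ov x y < ov x b"
proof (induction p arbitrary: u rule: merge.induct)
  case (2 e)
  then show ?case by (auto simp: sublist_def)
next
  case (3 e c rest)
  define Mg where "Mg = merge (e # c # rest)"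
  define M' where "M' = merge (c # rest)"
  define d where "d = length (pref e c)"
  define ob where "ob = ov e c"
  have ne: "e \<noteq> []" "c \<noteq> []" "\<forall>x\<in>set (c # rest). x \<noteq> []" using 3 by auto
  have op: "ob < length e" "ob < length c" using ov_props[OF ne(1,2)] ob_def by auto
  have dd: "d = length e - ob" unfolding d_def pref_def ob_def using op ob_def by simp
  have MgM: "Mg = pref e c @ M'" unfolding Mg_def M'_def by simp
  obtain r where r: "M' = c @ r" using prefix_hd_merge[of "c # rest"] ne unfolding M'_def
    by (auto simp: prefix_def)
  obtain z where z: "Mg = e @ z" using prefix_hd_merge[of "e # c # rest"] 3(2) unfolding Mg_def
    by (auto simp: prefix_def)
  have ua: "Mg = u @ b @ w" using 3 Mg_def by simp
  have dM: "drop d Mg = M'" using MgM d_def by simp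
  consider "length u > d" | "length u = d" | "length u < d" by linarith
  then show ?case
  proof cases
    case 1
    have "drop d Mg = drop d u @ b @ w" using ua 1 by simp
    then have "merge (c # rest) = drop d u @ b @ w" using M'_def dM by simp
    moreover have "drop d u \<noteq> []" using 1 by simp
    ultimately obtain x y where "(x, y) \<in> set (edges (c # rest))" "ov x y < ov x b"
      using 3 by (metis list.set_intros(2))
    then show ?thesis by auto
  next
    case 2
    have "drop d Mg = b @ w" using ua 2 by simp
    then have bw: "b @ w = c @ r" using dM r by simp
    show ?thesis
    proof (cases "length b \<le> length c")
      case True
      then have "take (length b) c = b" using bw by (metis append_eq_append_conv_if)
      then have "sublist b c" by (metis sublist_take)
      then show ?thesis using 3(2) by auto
    next
      case False
      then have "take (length c) b = c" using bw by (metis append_eq_append_conv_if nat_le_linear)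
      then have "sublist c b" by (metis sublist_take)
      then show ?thesis using 3(2) by auto
    qed
  next
    case 3
    define s where "s = length u"
    have sd: "s < d" using 3 s_def by simp
    have s0: "s \<ge> 1" using \<open>u \<noteq> []\<close> s_def by (cases u) auto
    have hA: "\<And>i. i < length b \<Longrightarrow> Mg ! (s + i) = b ! i" using ua s_def by (simp add: nth_append)
    have hB: "\<And>i. i < length e \<Longrightarrow> Mg ! i = e ! i" using z by (simp add: nth_append)
    have s1: "s + length b > length e"
    proof (rule ccontr)
      assume "\<not> ?thesis"
      then have "b = take (length b) (drop s e)"
        by (intro nth_equalityI) (auto simp: hA[symmetric] hB)
      then have "sublist b e" by (metis sublist_td)
      then show False using \<open>\<forall>e\<in>set (e # c # rest). e \<noteq> [] \<and> \<not> sublist b e \<and> \<not> sublist e b\<close> by auto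
    qed
    define l where "l = length e - s"
    have l1: "l < length e" "l < length b" "ob < l" using sd s1 s0 dd op l_def by auto
    have "drop (length e - l) e = take l b"
    proof (intro nth_equalityI)
      show "length (drop (length e - l) e) = length (take l b)" using l1 by simp
      fix i assume "i < length (drop (length e - l) e)"
      then have i: "i < l" using l1 by simp
      have "drop (length e - l) e ! i = e ! (s + i)" using l1 i l_def sd by simp
      also have "\<dots> = Mg ! (s + i)" using hB i l_def sd by simp
      also have "\<dots> = b ! i" using hA i l1 by simp
      finally show "drop (length e - l) e ! i = take l b ! i" using i by simp
    qed
    then have "l \<le> ov e b" using ov_ge l1 by blast
    then show ?thesis using l1 ob_def by (intro exI[of _ e] exI[of _ c]) auto
  qed
qed auto


definition SF :: "dna set \<Rightarrow> bool" where
  "SF V \<longleftrightarrow> (\<forall>a\<in>V. \<forall>b\<in>V. a \<noteq> b \<longrightarrow> \<not> sublist a b) \<and> (\<forall>s\<in>V. rc s \<in> V)"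

definition inv :: "dna set \<Rightarrow> dna list set \<Rightarrow> dna list list \<Rightarrow> bool" where
  "inv V Q cs \<longleftrightarrow>
    (\<forall>X\<in>Q. X \<noteq> [] \<and> set X \<subseteq> V \<and> rcseq X \<in> Q) \<and>
    (\<forall>X\<in>Q. \<forall>Y\<in>Q. Y \<noteq> X \<longrightarrow> Y \<noteq> rcseq X \<longrightarrow> set X \<inter> set Y = {}) \<and>
    (\<forall>X\<in>Q. \<forall>x y. (x, y) \<in> set (edges X) \<longrightarrow> (\<forall>Y\<in>Q.
        (last Y \<notin> set X \<union> rc ` set X \<longrightarrow> ov (last Y) y \<le> ov x y) \<and>
        (hd Y \<notin> set X \<union> rc ` set X \<longrightarrow> ov x (hd Y) \<le> ov x y))) \<and>
    (\<forall>X\<in>Q. \<forall>x y. (x, y) \<in> set (edges X) \<longrightarrow> (\<forall>P R. allowed Q P R \<longrightarrow> ov (last P) (hd R) \<le> ov x y)) \<and>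
    (\<forall>c\<in>set cs. c \<noteq> [] \<and> set c \<subseteq> V \<and> (\<forall>x y. (x, y) \<in> set (edges c) \<longrightarrow> ov (last c) (hd c) \<le> ov x y))"

lemma invD:
  assumes "inv V Q cs"
  shows "\<forall>X\<in>Q. X \<noteq> [] \<and> set X \<subseteq> V \<and> rcseq X \<in> Q"
    and "\<forall>X\<in>Q. \<forall>Y\<in>Q. Y \<noteq> X \<longrightarrow> Y \<noteq> rcseq X \<longrightarrow> set X \<inter> set Y = {}"
    and "\<forall>X\<in>Q. \<forall>x y. (x, y) \<in> set (edges X) \<longrightarrow> (\<forall>Y\<in>Q.
        (last Y \<notin> set X \<union> rc ` set X \<longrightarrow> ov (last Y) y \<le> ov x y) \<and>
        (hd Y \<notin> set X \<union> rc ` set X \<longrightarrow> ov x (hd Y) \<le> ov x y))"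
    and "\<forall>X\<in>Q. \<forall>x y. (x, y) \<in> set (edges X) \<longrightarrow> (\<forall>P R. allowed Q P R \<longrightarrow> ov (last P) (hd R) \<le> ov x y)"
    and "\<forall>c\<in>set cs. c \<noteq> [] \<and> set c \<subseteq> V \<and> (\<forall>x y. (x, y) \<in> set (edges c) \<longrightarrow> ov (last c) (hd c) \<le> ov x y)"
  using assms unfolding inv_def
  by (rule conjunct1, rule conjunct2[THEN conjunct1], rule conjunct2[THEN conjunct2, THEN conjunct1],
      rule conjunct2[THEN conjunct2, THEN conjunct2, THEN conjunct1],
      rule conjunct2[THEN conjunct2, THEN conjunct2, THEN conjunct2])

lemma set_edges: "(x, y) \<in> set (edges X) \<Longrightarrow> x \<in> set X \<and> y \<in> set X"
  by (induction X rule: edges.induct) auto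

lemma nil_V: "SF V \<Longrightarrow> [] \<in> V \<Longrightarrow> a \<in> V \<Longrightarrow> a = []"
  unfolding SF_def by (metis sublist_Nil_left)

lemma ends_le:
  assumes "P \<noteq> []" "R \<noteq> []" "\<forall>e\<in>set P. e \<noteq> []" "\<forall>e\<in>set R. e \<noteq> []"
  shows "ov (last P) (hd R) \<le> ov (merge P) (merge R)"
  using ov_ends[OF suffix_last_merge[OF assms(1)] prefix_hd_merge[OF assms(2,4)]] assms by auto

lemma crux:
  assumes sf: "SF V" and iv: "inv V Q cs" and pq: "p \<in> Q" "q \<in> Q" "p \<noteq> q" "q \<noteq> rcseq p"
    and nn: "[] \<notin> V"
  shows "ov (merge p) (merge q) \<le> ov (last p) (hd q)"
proof -
  have I1: "\<forall>X\<in>Q. X \<noteq> [] \<and> set X \<subseteq> V \<and> rcseq X \<in> Q"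
    and I2: "\<forall>X\<in>Q. \<forall>Y\<in>Q. Y \<noteq> X \<longrightarrow> Y \<noteq> rcseq X \<longrightarrow> set X \<inter> set Y = {}"
    and I3: "\<forall>X\<in>Q. \<forall>x y. (x, y) \<in> set (edges X) \<longrightarrow> (\<forall>Y\<in>Q.
        (last Y \<notin> set X \<union> rc ` set X \<longrightarrow> ov (last Y) y \<le> ov x y) \<and>
        (hd Y \<notin> set X \<union> rc ` set X \<longrightarrow> ov x (hd Y) \<le> ov x y))"
    using invD[OF iv] by -
  have ne: "p \<noteq> []" "q \<noteq> []" "set p \<subseteq> V" "set q \<subseteq> V" "rcseq p \<in> Q" "rcseq q \<in> Q"
    using I1 pq by auto
  have nep: "\<forall>e\<in>set p. e \<noteq> []" and neq: "\<forall>e\<in>set q. e \<noteq> []" using ne nn by auto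
  have d1: "set p \<inter> set q = {}" using I2 pq by auto
  have r1: "rcseq q \<noteq> p" using pq(4) by (metis rcseq_rcseq)
  have r2: "rcseq q \<noteq> rcseq p" using pq(3) by (metis rcseq_rcseq)
  have d2: "set p \<inter> set (rcseq q) = {}" using I2 pq(1) ne(6) r1 r2 by blast
  have r3: "rcseq p \<noteq> q" using pq(4) by simp
  have d3: "set q \<inter> set (rcseq p) = {}" using I2 pq(2) ne(5) r3 r2 by metis
  define a where "a = last p"
  define b where "b = hd q"
  have a: "a \<in> set p" "a \<in> V" "a \<noteq> []" using ne nep a_def by auto
  have b: "b \<in> set q" "b \<in> V" "b \<noteq> []" using ne neq b_def by auto
  define A where "A = merge p"
  define B where "B = merge q"
  have sA: "suffix a A" using suffix_last_merge ne a_def A_def by auto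
  have pB: "prefix b B" using prefix_hd_merge ne neq b_def B_def by auto
  have AB: "A \<noteq> []" "B \<noteq> []" using sA pB a b by (auto simp: suffix_def prefix_def)
  define k where "k = ov A B"
  have kp: "k < length A" "k < length B" "drop (length A - k) A = take k B"
    using ov_props[OF AB] k_def by auto
  obtain A0 where A0: "A = A0 @ a" using sA by (auto simp: suffix_def)
  obtain B0 where B0: "B = b @ B0" using pB by (auto simp: prefix_def)
  show ?thesis
  proof (rule ccontr)
    assume "\<not> ?thesis"
    then have gt: "ov a b < k" using a_def b_def A_def B_def k_def by simp
    consider "k < length a \<and> k < length b" | "length a \<le> k" | "length b \<le> k" by linarith
    then show False
    proof cases
      case 1
      have e0: "length A0 \<le> length A - k" using A0 1 by (simp, linarith)
      have "drop (length A - k) A = drop (length a - k) a" using A0 e0 by simp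
      moreover have "take k B = take k b" using B0 1 by simp
      ultimately have "drop (length a - k) a = take k b"
        using kp(3) by simp
      then have "k \<le> ov a b" using ov_ge 1 by blast
      then show False using gt by simp
    next
      case 2
      have "take k B = drop (length A - k) A0 @ a" using kp(3) A0 2 by simp
      then have "B = drop (length A - k) A0 @ a @ drop k B" by (metis append.assoc append_take_drop_id)
      moreover have "drop k B \<noteq> []" using kp by simp
      moreover have "\<forall>e\<in>set q. e \<noteq> [] \<and> \<not> sublist a e \<and> \<not> sublist e a"
      proof
        fix e assume e: "e \<in> set q"
        then have "e \<in> V" "a \<noteq> e" using ne d1 a by auto
        then show "e \<noteq> [] \<and> \<not> sublist a e \<and> \<not> sublist e a"
          using sf a neq e unfolding SF_def by metis
      qed
      ultimately obtain x y where xy: "(x, y) \<in> set (edges q)" "ov x y < ov a y"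
        using straddleL B_def by blast
      have "a \<notin> set q \<union> rc ` set q" using a d1 d2 by auto
      then have "ov a y \<le> ov x y" using I3 pq xy a_def by blast
      then show False using xy by simp
    next
      case 3
      have "drop (length A - k) A = b @ take (k - length b) B0" using kp(3) B0 3 by simp
      then have "A = take (length A - k) A @ b @ take (k - length b) B0" by (metis append_take_drop_id)
      moreover have "take (length A - k) A \<noteq> []" using kp AB by simp
      moreover have "\<forall>e\<in>set p. e \<noteq> [] \<and> \<not> sublist b e \<and> \<not> sublist e b"
      proof
        fix e assume e: "e \<in> set p"
        then have "e \<in> V" "b \<noteq> e" using ne d1 b by auto
        then show "e \<noteq> [] \<and> \<not> sublist b e \<and> \<not> sublist e b"
          using sf b nep e unfolding SF_def by metis
      qed
      ultimately obtain x y where xy: "(x, y) \<in> set (edges p)" "ov x y < ov x b"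
        using straddleR A_def by blast
      have "b \<notin> set p \<union> rc ` set p" using b d1 d3 by auto
      then have "ov x b \<le> ov x y" using I3 pq xy b_def by blast
      then show False using xy by simp
    qed
  qed
qed


lemma step_self:
  assumes iv: "inv V Q cs" and mp: "maximal_pair Q p p"
  shows "inv V (Q - {p, rcseq p}) (cs @ [p])"
proof -
  have al: "allowed Q p p" using mp unfolding maximal_pair_def by blast
  have pQ: "p \<in> Q" using al unfolding allowed_def by blast
  have sub: "\<And>P R. allowed (Q - {p, rcseq p}) P R \<Longrightarrow> allowed Q P R"
    unfolding allowed_def by blast
  have I1: "\<forall>X\<in>Q. X \<noteq> [] \<and> set X \<subseteq> V \<and> rcseq X \<in> Q"
    and I4: "\<forall>X\<in>Q. \<forall>x y. (x, y) \<in> set (edges X) \<longrightarrow> (\<forall>P R. allowed Q P R \<longrightarrow> ov (last P) (hd R) \<le> ov x y)"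
    using invD[OF iv] by -
  have "\<forall>X\<in>Q - {p, rcseq p}. X \<noteq> [] \<and> set X \<subseteq> V \<and> rcseq X \<in> Q - {p, rcseq p}"
  proof
    fix X assume X: "X \<in> Q - {p, rcseq p}"
    then have "rcseq X \<noteq> p" "rcseq X \<noteq> rcseq p" by (auto, metis rcseq_rcseq)
    then show "X \<noteq> [] \<and> set X \<subseteq> V \<and> rcseq X \<in> Q - {p, rcseq p}" using X I1 by auto
  qed
  moreover have "\<forall>x y. (x, y) \<in> set (edges p) \<longrightarrow> ov (last p) (hd p) \<le> ov x y"
    using I4 pQ al by blast
  ultimately show ?thesis using iv pQ I1 sub unfolding inv_def
    by (simp only: set_append) (auto; blast)
qed


lemma step_join:
  assumes sf: "SF V" and iv: "inv V Q cs" and mp: "maximal_pair Q p q" and pq: "p \<noteq> q"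
  shows "inv V ((Q - {p, rcseq p, q, rcseq q}) \<union> {p @ q, rcseq (p @ q)}) cs"
proof -
  define Q' where "Q' = (Q - {p, rcseq p, q, rcseq q}) \<union> {p @ q, rcseq (p @ q)}"
  have al: "allowed Q p q" using mp unfolding maximal_pair_def by blast
  have pQ: "p \<in> Q" "q \<in> Q" "q \<noteq> rcseq p" using al pq unfolding allowed_def by auto
  have I1: "\<forall>X\<in>Q. X \<noteq> [] \<and> set X \<subseteq> V \<and> rcseq X \<in> Q"
    and I2: "\<forall>X\<in>Q. \<forall>Y\<in>Q. Y \<noteq> X \<longrightarrow> Y \<noteq> rcseq X \<longrightarrow> set X \<inter> set Y = {}"
    and I3: "\<forall>X\<in>Q. \<forall>x y. (x, y) \<in> set (edges X) \<longrightarrow> (\<forall>Y\<in>Q.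
        (last Y \<notin> set X \<union> rc ` set X \<longrightarrow> ov (last Y) y \<le> ov x y) \<and>
        (hd Y \<notin> set X \<union> rc ` set X \<longrightarrow> ov x (hd Y) \<le> ov x y))"
    and I4: "\<forall>X\<in>Q. \<forall>x y. (x, y) \<in> set (edges X) \<longrightarrow> (\<forall>P R. allowed Q P R \<longrightarrow> ov (last P) (hd R) \<le> ov x y)"
    and I5: "\<forall>c\<in>set cs. c \<noteq> [] \<and> set c \<subseteq> V \<and> (\<forall>x y. (x, y) \<in> set (edges c) \<longrightarrow> ov (last c) (hd c) \<le> ov x y)"
    using invD[OF iv] by -
  have ne: "p \<noteq> []" "q \<noteq> []" "set p \<subseteq> V" "set q \<subseteq> V" "rcseq p \<in> Q" "rcseq q \<in> Q"
    using I1 pQ by auto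
  have d1: "set p \<inter> set q = {}" using I2 pQ pq by auto
  have r1: "rcseq q \<noteq> p" using pQ(3) by (metis rcseq_rcseq)
  have r2: "rcseq q \<noteq> rcseq p" using pq by (metis rcseq_rcseq)
  have d2: "set p \<inter> set (rcseq q) = {}" using I2 pQ(1) ne(6) r1 r2 by blast
  have r3: "rcseq p \<noteq> q" using pQ(3) by simp
  have d3: "set q \<inter> set (rcseq p) = {}" using I2 pQ(2) ne(5) r3 r2 by metis
  have nn: "[] \<notin> V"
  proof
    assume "[] \<in> V"
    moreover have "hd p \<in> V" "hd q \<in> V" using ne by auto
    ultimately have "hd p = []" "hd q = []" using nil_V[OF sf] by auto
    then show False using d1 ne by (metis disjoint_iff list.set_sel(1))
  qed
  have neQ: "\<And>X e. X \<in> Q \<Longrightarrow> e \<in> set X \<Longrightarrow> e \<noteq> []" using I1 nn by blast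
  define a where "a = last p"
  define b where "b = hd q"
  have ab: "a \<in> set p" "b \<in> set q" using ne a_def b_def by auto
  have Mmax: "\<And>P R. allowed Q P R \<Longrightarrow> ov (merge P) (merge R) \<le> ov (merge p) (merge q)"
    using mp unfolding maximal_pair_def by blast
  have cr: "ov (merge p) (merge q) \<le> ov a b"
    using crux[OF sf iv pQ(1,2) pq pQ(3) nn] a_def b_def by simp
  have keyE: "\<And>P R. allowed Q P R \<Longrightarrow> ov (last P) (hd R) \<le> ov a b"
  proof -
    fix P R assume "allowed Q P R"
    then have "P \<in> Q" "R \<in> Q" "ov (merge P) (merge R) \<le> ov (merge p) (merge q)"
      using Mmax unfolding allowed_def by auto
    moreover have "ov (last P) (hd R) \<le> ov (merge P) (merge R)"
      using ends_le I1 neQ calculation by blast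
    ultimately show "ov (last P) (hd R) \<le> ov a b" using cr by linarith
  qed
  have ovrc: "ov (rc b) (rc a) = ov a b" by (simp add: ov_rc)
  have rpq: "rcseq (p @ q) = rcseq q @ rcseq p" by (simp add: rcseq_append)
  have lrq: "last (rcseq q) = rc b" and hrp: "hd (rcseq p) = rc a"
    using ne a_def b_def by (auto simp: last_rcseq hd_rcseq)
  have rne: "rcseq p \<noteq> []" "rcseq q \<noteq> []" using ne by auto
  have ecl: "\<And>X' x y. X' \<in> Q' \<Longrightarrow> (x, y) \<in> set (edges X') \<Longrightarrow>
     (\<exists>X0\<in>Q. set X0 \<subseteq> set X' \<and> (x, y) \<in> set (edges X0)) \<or>
     (X' = p @ q \<and> x = a \<and> y = b) \<or> (X' = rcseq (p @ q) \<and> x = rc b \<and> y = rc a)"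
  proof -
    fix X' x y assume X': "X' \<in> Q'" and e: "(x, y) \<in> set (edges X')"
    consider "X' = p @ q" | "X' = rcseq (p @ q)" | "X' \<in> Q" using X' Q'_def by blast
    then show "?thesis X' x y"
    proof cases
      case 1
      then have "(x, y) \<in> set (edges p) \<or> (x, y) = (a, b) \<or> (x, y) \<in> set (edges q)"
        using e edges_append[OF ne(1,2)] a_def b_def by auto
      then show ?thesis using 1 pQ by auto
    next
      case 2
      then have "(x, y) \<in> set (edges (rcseq q)) \<or> (x, y) = (rc b, rc a) \<or> (x, y) \<in> set (edges (rcseq p))"
        using e edges_append[OF rne(2,1)] rpq lrq hrp by auto
      then show ?thesis using 2 ne rpq by auto
    next
      case 3
      then show ?thesis using e by blast
    qed
  qed
  have lastQ: "\<And>Y'. Y' \<in> Q' \<Longrightarrow> \<exists>Y\<in>Q. last Y' = last Y"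
    using Q'_def pQ ne rpq rne by auto
  have hdQ: "\<And>Y'. Y' \<in> Q' \<Longrightarrow> \<exists>Y\<in>Q. hd Y' = hd Y"
    using Q'_def pQ ne rpq rne by auto
  have allowQ: "\<And>P' R'. allowed Q' P' R' \<Longrightarrow> \<exists>P R. allowed Q P R \<and> last P = last P' \<and> hd R = hd R'"
  proof -
    fix P' R' assume A: "allowed Q' P' R'"
    define P where "P = (if P' = p @ q then q else if P' = rcseq (p @ q) then rcseq p else P')"
    define R where "R = (if R' = p @ q then p else if R' = rcseq (p @ q) then rcseq q else R')"
    have lP: "last P = last P'" using P_def ne rpq rne by auto
    have hR: "hd R = hd R'" using R_def ne rpq rne by auto
    have "allowed Q P R"
      using A pQ ne pq unfolding allowed_def P_def R_def Q'_def
      by (auto simp: rcseq_append) (metis rcseq_rcseq)+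
    then show "\<exists>P R. allowed Q P R \<and> last P = last P' \<and> hd R = hd R'" using lP hR by blast
  qed
  have C1: "\<forall>X\<in>Q'. X \<noteq> [] \<and> set X \<subseteq> V \<and> rcseq X \<in> Q'"
  proof
    fix X assume X: "X \<in> Q'"
    have rcV: "\<And>s. s \<in> V \<Longrightarrow> rc s \<in> V" using sf unfolding SF_def by blast
    consider "X = p @ q" | "X = rcseq (p @ q)" | "X \<in> Q - {p, rcseq p, q, rcseq q}" using X Q'_def by blast
    then show "X \<noteq> [] \<and> set X \<subseteq> V \<and> rcseq X \<in> Q'"
    proof cases
      case 1 then show ?thesis using ne Q'_def by auto
    next
      case 2 then show ?thesis using ne Q'_def rcV by auto
    next
      case 3 then show ?thesis using I1 Q'_def by (auto; metis rcseq_rcseq)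
    qed
  qed
  have C2: "\<forall>X\<in>Q'. \<forall>Y\<in>Q'. Y \<noteq> X \<longrightarrow> Y \<noteq> rcseq X \<longrightarrow> set X \<inter> set Y = {}"
  proof (intro ballI impI)
    fix X Y assume X: "X \<in> Q'" and Y: "Y \<in> Q'" and xy: "Y \<noteq> X" "Y \<noteq> rcseq X"
    have old: "\<And>X Y. X \<in> Q - {p, rcseq p, q, rcseq q} \<Longrightarrow> Y \<in> {p, q, rcseq p, rcseq q} \<Longrightarrow> set X \<inter> set Y = {}"
    proof -
      fix X Y assume X: "X \<in> Q - {p, rcseq p, q, rcseq q}" and Y: "Y \<in> {p, q, rcseq p, rcseq q}"
      have YQ: "Y \<in> Q" using Y pQ ne by auto
      have YX: "Y \<noteq> X" using X Y by auto
      have "rcseq Y \<in> {p, q, rcseq p, rcseq q}" using Y by auto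
      then have "Y \<noteq> rcseq X" using X by auto
      then show "set X \<inter> set Y = {}" using I2 X YQ YX by blast
    qed
    consider "X = p @ q" | "X = rcseq (p @ q)" | "X \<in> Q - {p, rcseq p, q, rcseq q}" using X Q'_def by blast
    then show "set X \<inter> set Y = {}"
    proof cases
      case 1
      then have "Y \<in> Q - {p, rcseq p, q, rcseq q}" using Y xy Q'_def by auto
      then show ?thesis using old[of Y p] old[of Y q] 1 by auto
    next
      case 2
      then have "Y \<in> Q - {p, rcseq p, q, rcseq q}" using Y xy Q'_def by auto
      then show ?thesis using old[of Y "rcseq p"] old[of Y "rcseq q"] 2 rpq by auto
    next
      case 3
      consider "Y = p @ q" | "Y = rcseq (p @ q)" | "Y \<in> Q - {p, rcseq p, q, rcseq q}" using Y Q'_def by blast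
      then show ?thesis
      proof cases
        case 1 then show ?thesis using old[of X p] old[of X q] 3 by auto
      next
        case 2 then show ?thesis using old[of X "rcseq p"] old[of X "rcseq q"] 3 rpq by auto
      next
        case 4: 3 then show ?thesis using I2 3 xy by auto
      qed
    qed
  qed
  have C3: "\<forall>X\<in>Q'. \<forall>x y. (x, y) \<in> set (edges X) \<longrightarrow> (\<forall>Y\<in>Q'.
        (last Y \<notin> set X \<union> rc ` set X \<longrightarrow> ov (last Y) y \<le> ov x y) \<and>
        (hd Y \<notin> set X \<union> rc ` set X \<longrightarrow> ov x (hd Y) \<le> ov x y))"
  proof (intro ballI allI impI conjI)
    fix X x y Y assume X: "X \<in> Q'" and e: "(x, y) \<in> set (edges X)" and Y: "Y \<in> Q'"
    have sX1: "set (p @ q) = set p \<union> set q" by simp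
    have sX2: "set (rcseq (p @ q)) = rc ` set p \<union> rc ` set q" by (simp add: image_Un)
    have sX3: "rc ` set (rcseq (p @ q)) = set p \<union> set q" by (simp add: image_Un image_image)
    have hp: "hd p \<in> set p" and lq: "last q \<in> set q" using ne by auto
    have lrp: "last (rcseq p) = rc (hd p)" and hrq: "hd (rcseq q) = rc (last q)"
      using ne by (auto simp: last_rcseq hd_rcseq)
    {
      assume u: "last Y \<notin> set X \<union> rc ` set X"
      obtain Y0 where Y0: "Y0 \<in> Q" "last Y = last Y0" using lastQ Y by blast
      have Y0ne: "Y0 \<noteq> []" "rcseq Y0 \<in> Q" using I1 Y0 by auto
      consider (old) X0 where "X0 \<in> Q" "set X0 \<subseteq> set X" "(x, y) \<in> set (edges X0)"
        | (n1) "X = p @ q" "x = a" "y = b" | (n2) "X = rcseq (p @ q)" "x = rc b" "y = rc a"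
        using ecl[OF X e] by blast
      then show "ov (last Y) y \<le> ov x y"
      proof cases
        case old
        then have "last Y \<notin> set X0 \<union> rc ` set X0" using u by blast
        then show ?thesis using I3 Y0 old by metis
      next
        case n1
        have "Y0 \<noteq> q" using u Y0 n1 lq by auto
        moreover have "Y0 \<noteq> rcseq q" using u Y0 n1 lrq ab by auto
        ultimately have "rcseq Y0 \<noteq> q" "Y0 \<noteq> q" by (metis rcseq_rcseq, simp)
        then have "allowed Q Y0 q" using Y0 pQ unfolding allowed_def by blast
        then have "ov (last Y0) (hd q) \<le> ov a b" using keyE by blast
        then show ?thesis using n1 Y0 b_def by simp
      next
        case n2
        have "Y0 \<noteq> rcseq p" using u Y0 n2 lrp hp sX2 by auto
        then have "rcseq Y0 \<noteq> p" by (metis rcseq_rcseq)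
        moreover have "p \<noteq> Y0" using u Y0 n2 ab a_def sX3 by auto
        ultimately have "allowed Q p (rcseq Y0)" using Y0ne pQ unfolding allowed_def
          by (metis rcseq_rcseq)
        then have "ov (last p) (hd (rcseq Y0)) \<le> ov a b" using keyE by blast
        then have "ov a (rc (last Y)) \<le> ov a b" using Y0 Y0ne a_def by (simp add: hd_rcseq)
        moreover have "ov (last Y) (rc a) = ov a (rc (last Y))" using ov_rc[of "rc (last Y)" a] by simp
        ultimately show ?thesis using n2 ovrc by simp
      qed
    }
    {
      assume v: "hd Y \<notin> set X \<union> rc ` set X"
      obtain Y0 where Y0: "Y0 \<in> Q" "hd Y = hd Y0" using hdQ Y by blast
      have Y0ne: "Y0 \<noteq> []" "rcseq Y0 \<in> Q" using I1 Y0 by auto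
      consider (old) X0 where "X0 \<in> Q" "set X0 \<subseteq> set X" "(x, y) \<in> set (edges X0)"
        | (n1) "X = p @ q" "x = a" "y = b" | (n2) "X = rcseq (p @ q)" "x = rc b" "y = rc a"
        using ecl[OF X e] by blast
      then show "ov x (hd Y) \<le> ov x y"
      proof cases
        case old
        then have "hd Y \<notin> set X0 \<union> rc ` set X0" using v by blast
        then show ?thesis using I3 Y0 old by metis
      next
        case n1
        have "Y0 \<noteq> p" using v Y0 n1 hp by auto
        moreover have "Y0 \<noteq> rcseq p" using v Y0 n1 hrp ab by auto
        ultimately have "allowed Q p Y0" using Y0 pQ unfolding allowed_def by blast
        then have "ov (last p) (hd Y0) \<le> ov a b" using keyE by blast
        then show ?thesis using n1 Y0 a_def by simp
      next
        case n2
        have "Y0 \<noteq> rcseq q" using v Y0 n2 hrq lq sX2 by auto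
        then have "rcseq Y0 \<noteq> q" by (metis rcseq_rcseq)
        moreover have "Y0 \<noteq> q" using v Y0 n2 ab b_def sX3 by auto
        ultimately have "allowed Q (rcseq Y0) q" using Y0ne pQ unfolding allowed_def
          by (metis rcseq_rcseq)
        then have "ov (last (rcseq Y0)) (hd q) \<le> ov a b" using keyE by blast
        then have "ov (rc (hd Y)) b \<le> ov a b" using Y0 Y0ne b_def by (simp add: last_rcseq)
        moreover have "ov (rc b) (hd Y) = ov (rc (hd Y)) b" using ov_rc[of b "rc (hd Y)"] by simp
        ultimately show ?thesis using n2 ovrc by simp
      qed
    }
  qed
  have C4: "\<forall>X\<in>Q'. \<forall>x y. (x, y) \<in> set (edges X) \<longrightarrow> (\<forall>P R. allowed Q' P R \<longrightarrow> ov (last P) (hd R) \<le> ov x y)"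
  proof (intro ballI allI impI)
    fix X x y P' R' assume X: "X \<in> Q'" and e: "(x, y) \<in> set (edges X)" and A: "allowed Q' P' R'"
    obtain P R where PR: "allowed Q P R" "last P = last P'" "hd R = hd R'" using allowQ A by blast
    consider (old) X0 where "X0 \<in> Q" "set X0 \<subseteq> set X" "(x, y) \<in> set (edges X0)"
      | (n1) "X = p @ q" "x = a" "y = b" | (n2) "X = rcseq (p @ q)" "x = rc b" "y = rc a"
      using ecl[OF X e] by blast
    then show "ov (last P') (hd R') \<le> ov x y"
    proof cases
      case old then show ?thesis using I4 PR by metis
    next
      case n1 then show ?thesis using keyE PR by metis
    next
      case n2 then show ?thesis using keyE PR ovrc by metis
    qed
  qed
  show ?thesis using C1 C2 C3 C4 I5 unfolding inv_def Q'_def[symmetric] by blast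
qed


lemma inv_init:
  assumes "SF V"
  shows "inv V ((\<lambda>s. [s]) ` V) []"
proof -
  have rcV: "\<And>s. s \<in> V \<Longrightarrow> rc s \<in> V" using assms unfolding SF_def by blast
  have "\<forall>X\<in>(\<lambda>s. [s]) ` V. X \<noteq> [] \<and> set X \<subseteq> V \<and> rcseq X \<in> (\<lambda>s. [s]) ` V"
    using rcV by (auto simp: rcseq_def)
  moreover have "\<forall>X\<in>(\<lambda>s. [s]) ` V. \<forall>Y\<in>(\<lambda>s. [s]) ` V. Y \<noteq> X \<longrightarrow> Y \<noteq> rcseq X \<longrightarrow> set X \<inter> set Y = {}"
    by auto
  moreover have "\<forall>X\<in>(\<lambda>s. [s]) ` V. edges X = []" by auto
  ultimately show ?thesis unfolding inv_def by auto
qed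

lemma inv_steps:
  assumes sf: "SF V"
  shows "mg_step\<^sup>*\<^sup>* st st' \<Longrightarrow> inv V (fst st) (snd st) \<Longrightarrow> inv V (fst st') (snd st')"
proof (induction rule: rtranclp_induct)
  case base
  then show ?case .
next
  case (step y z)
  then have iv: "inv V (fst y) (snd y)" by blast
  from step(2) show ?case
  proof cases
    case (self Q p cs)
    then show ?thesis using step_self iv by auto
  next
    case (join Q p q cs)
    then show ?thesis using step_join[OF sf] iv by auto
  qed
qed

lemma cycle_le:
  assumes sf: "SF V" and c: "c \<noteq> []" "set c \<subseteq> V"
    and ed: "\<forall>x y. (x, y) \<in> set (edges c) \<longrightarrow> ov (last c) (hd c) \<le> ov x y"
    and j: "1 \<le> j" "j \<le> length c"
  shows "length (merge c) \<le> length (merge (drop j c @ take j c))"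
proof (cases "[] \<in> V")
  case True
  then have "\<forall>e\<in>set c. e = []" using c nil_V[OF sf] by blast
  then show ?thesis using merge_all_nil by simp
next
  case False
  then have nec: "\<forall>e\<in>set c. e \<noteq> []" using c by blast
  show ?thesis
  proof (cases "j = length c")
    case True
    then show ?thesis by simp
  next
    case False
    define A where "A = take j c"
    define B where "B = drop j c"
    have AB: "A \<noteq> []" "B \<noteq> []" using j False c A_def B_def by auto
    have cAB: "c = A @ B" using A_def B_def by simp
    have neA: "\<forall>e\<in>set (B @ A). e \<noteq> []" using nec cAB by auto
    have e1: "edges c = edges A @ (last A, hd B) # edges B" using cAB edges_append[OF AB] by simp
    have e2: "edges (B @ A) = edges B @ (last B, hd A) # edges A" using edges_append[OF AB(2,1)] by simp
    have lB: "last B = last c" and hA: "hd A = hd c" using cAB AB by auto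
    have "(last A, hd B) \<in> set (edges c)" using e1 by simp
    then have le: "ov (last B) (hd A) \<le> ov (last A) (hd B)" using ed lB hA by simp
    have L1: "length (merge c) + sum_list (map (\<lambda>(x, y). ov x y) (edges c)) = sum_list (map length c)"
      using merge_len c nec by blast
    have L2: "length (merge (B @ A)) + sum_list (map (\<lambda>(x, y). ov x y) (edges (B @ A))) = sum_list (map length (B @ A))"
      using merge_len AB neA by blast
    have "sum_list (map length (B @ A)) = sum_list (map length c)" using cAB by simp
    then show ?thesis using L1 L2 e1 e2 le A_def B_def by simp
  qed
qed

theorem lemma16:
  fixes S :: "dna set" and cs :: "dna list list" and x :: "dna list \<Rightarrow> dna"
  assumes "scs_rc_instance S"
    and "mgreedy_run S cs"
    and "\<forall>c \<in> set cs. xC_props c (x c)"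
  shows "(\<Sum>c\<leftarrow>cs. length (merge c)) \<le> (\<Sum>c\<leftarrow>cs. length (x c))"
proof -
  define V where "V = S \<union> rc ` S"
  have sf: "SF V"
  proof -
    have "\<forall>a\<in>V. \<forall>b\<in>V. a \<noteq> b \<longrightarrow> \<not> sublist a b" using assms(1) unfolding scs_rc_instance_def V_def by blast
    moreover have "\<forall>s\<in>V. rc s \<in> V" unfolding V_def by auto
    ultimately show ?thesis unfolding SF_def by blast
  qed
  have "inv V (mg_init S) []" using inv_init[OF sf] unfolding mg_init_def V_def by simp
  then have "inv V {} cs" using inv_steps[OF sf, of "(mg_init S, [])" "({}, cs)"] assms(2)
    unfolding mgreedy_run_def by simp
  then have C: "\<forall>c\<in>set cs. c \<noteq> [] \<and> set c \<subseteq> V \<and> (\<forall>x y. (x, y) \<in> set (edges c) \<longrightarrow> ov (last c) (hd c) \<le> ov x y)"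
    using invD(5) by blast
  have "\<forall>c\<in>set cs. length (merge c) \<le> length (x c)"
  proof
    fix c assume cin: "c \<in> set cs"
    obtain j where j: "1 \<le> j" "j \<le> length c" "suffix (merge (drop j c @ take j c)) (x c)"
      using assms(3) cin unfolding xC_props_def by blast
    have "length (merge c) \<le> length (merge (drop j c @ take j c))"
      using cycle_le[OF sf] C cin j by blast
    also have "\<dots> \<le> length (x c)" using j(3) by (rule suffix_length_le)
    finally show "length (merge c) \<le> length (x c)" .
  qed
  then show ?thesis by (intro sum_list_mono) blast
qed

end
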